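(* Let $\mathcal{D}$ be a distribution over $\mathcal{X}\times\mathcal{Y}$ where $\mathcal{Y}\subseteq\mathbb{R}^d$ and $\|y\|_\infty\le M$ for all $y\in\mathcal{Y}$, let $\alpha>0$, and let $\mathcal{T}$ be a bucketing with width $w=\sqrt{\alpha/M}$. Let $\pi:\mathcal{X}\to\Omega$ be an arbitrary policy and let $h:\mathcal{X}\to\mathcal{Y}$ be an $\alpha$-self-consistent model that is also $\alpha$-consistent with respect to $\pi$. Then \[\mathbb{E}_{\mathcal{D}}[\pi_h(x)\cdot y]\ge \mathbb{E}_{\mathcal{D}}[\pi(x)\cdot y]-4d\sqrt{\alpha M}.\]
   Context: $\Omega\subseteq[0,1]^d$ is an arbitrary feasible set of actions; a policy is a map $\pi:\mathcal{X}\to\Omega$. For a model $h:\mathcal{X}\to\mathcal{Y}$, its induced policy is $\pi_h(x)=\arg\max_{a\in\Omega}a\cdot h(x)$. A bucketing $\mathcal{T}$ of width $w$ is a partition of $[0,1]$ into $1/w$ consecutive intervals $\tau$ of width $w$. A model $h$ is $\alpha$-consistent with respect to a collection $\mathcal{C}\subseteq 2^{\mathcal{X}}$ if for every $C\in\mathcal{C}$, $\|\mathbb{E}_{\mathcal{D}}[y-h(x)\mid x\in C]\|_\infty\le \alpha/\Pr[x\in C]$. The level sets of a policy $\pi$ are $\mathcal{C}^{\mathcal{T}}_\pi=\{\{x:\pi(x)_i\in\tau\}:i\in[d],\tau\in\mathcal{T}\}$. $h$ is $\alpha$-consistent with respect to a policy $\pi$ if it is $\alpha$-consistent with respect to $\mathcal{C}^{\mathcal{T}}_\pi$,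 and $\alpha$-self-consistent if it is $\alpha$-consistent with respect to $\pi_h$. *)

theory Defs
  imports "HOL-Probability.Probability"
begin

definition Pr_in :: "('x \<times> 'y) measure \<Rightarrow> 'x set \<Rightarrow> real" where
  "Pr_in D C = measure D {z \<in> space D. fst z \<in> C}"

text \<open>Conditional mean E[f | x \<in> C] (with Isabelle's convention t / 0 = 0).\<close>
definition cond_mean :: "('x \<times> 'y) measure \<Rightarrow> 'x set \<Rightarrow> ('x \<times> 'y \<Rightarrow> real) \<Rightarrow> real" where
  "cond_mean D C f = (\<integral>z. indicator C (fst z) * f z \<partial>D) / Pr_in D C"

definition consistent_wrt ::
  "('x \<times> (real^'d)) measure \<Rightarrow> real \<Rightarrow> ('x \<Rightarrow> real^'d) \<Rightarrow> 'x set set \<Rightarrow> bool" where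
  "consistent_wrt D \<alpha> h Cs \<longleftrightarrow>
     (\<forall>C\<in>Cs. \<forall>i. \<bar>cond_mean D C (\<lambda>z. snd z $ i - h (fst z) $ i)\<bar> \<le> \<alpha> / Pr_in D C)"

definition bucketing :: "real \<Rightarrow> real set set \<Rightarrow> bool" where
  "bucketing w T \<longleftrightarrow> finite T \<and> real (card T) * w = 1 \<and>
     disjoint T \<and> \<Union>T = {0..1} \<and>
     (\<forall>\<tau>\<in>T. \<exists>a b. b - a = w \<and> {a<..<b} \<subseteq> \<tau> \<and> \<tau> \<subseteq> {a..b})"

definition level_sets :: "real set set \<Rightarrow> ('x \<Rightarrow> real^'d) \<Rightarrow> 'x set set" where
  "level_sets T \<pi> = {{x. \<pi> x $ i \<in> \<tau>} | i \<tau>. \<tau> \<in> T}"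

definition induced_policy :: "(real^'d) set \<Rightarrow> ('x \<Rightarrow> real^'d) \<Rightarrow> ('x \<Rightarrow> real^'d) \<Rightarrow> bool" where
  "induced_policy \<Omega> h p \<longleftrightarrow> (\<forall>x. p x \<in> \<Omega> \<and> (\<forall>a\<in>\<Omega>. a \<bullet> h x \<le> p x \<bullet> h x))"

end

theory Submission imports Defs begin

lemma tau_borel:
  fixes \<tau> :: "real set"
  assumes "{a<..<b} \<subseteq> \<tau>" "\<tau> \<subseteq> {a..b}"
  shows "\<tau> \<in> sets borel"
proof -
  have "\<tau> = {a<..<b} \<union> (\<tau> \<inter> {a,b})" using assms by auto
  moreover have "\<tau> \<inter> {a,b} \<in> sets borel"
    by (intro borel_closed finite_imp_closed) auto
  ultimately show ?thesis by (metis sets.Un borel_open open_greaterThanLessThan)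
qed

lemma coord_bound:
  fixes D :: "'z measure" and q g :: "'z \<Rightarrow> real"
  assumes P: "prob_space D" and bk: "bucketing w T" and wpos: "w > 0"
    and qm: "q \<in> borel_measurable D" and gm: "g \<in> borel_measurable D"
    and q01: "\<forall>z\<in>space D. 0 \<le> q z \<and> q z \<le> 1"
    and gK: "\<forall>z\<in>space D. \<bar>g z\<bar> \<le> K"
    and cons: "\<forall>\<tau>\<in>T. \<bar>\<integral>z. indicator \<tau> (q z) * g z \<partial>D\<bar> \<le> \<alpha>"
  shows "\<bar>\<integral>z. q z * g z \<partial>D\<bar> \<le> real (card T) * \<alpha> + w / 2 * K"
proof -
  interpret prob_space D by (rule P)
  from bk have fin: "finite T" and disj: "disjoint T" and un: "\<Union>T = {0..1}"
    and ex: "\<forall>\<tau>\<in>T. \<exists>a b. b - a = w \<and> {a<..<b} \<subseteq> \<tau> \<and> \<tau> \<subseteq> {a..b}"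
    unfolding bucketing_def by auto
  from ex obtain A B where AB: "\<And>\<tau>. \<tau>\<in>T \<Longrightarrow> B \<tau> - A \<tau> = w \<and> {A \<tau><..<B \<tau>} \<subseteq> \<tau> \<and> \<tau> \<subseteq> {A \<tau>..B \<tau>}"
    by metis
  define c where "c \<tau> = (A \<tau> + B \<tau>) / 2" for \<tau>
  have c01: "0 \<le> c \<tau> \<and> c \<tau> \<le> 1" if "\<tau> \<in> T" for \<tau>
  proof -
    have "c \<tau> \<in> {A \<tau><..<B \<tau>}" using AB[OF that] wpos unfolding c_def by auto
    hence "c \<tau> \<in> \<Union>T" using AB[OF that] that by blast
    thus ?thesis using un by auto
  qed
  have close: "\<bar>v - c \<tau>\<bar> \<le> w / 2" if "\<tau> \<in> T" "v \<in> \<tau>" for \<tau> v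
  proof -
    have "A \<tau> \<le> v" "v \<le> B \<tau>" "B \<tau> - A \<tau> = w" using AB[OF that(1)] that(2) by auto
    thus ?thesis unfolding c_def by (auto simp: abs_if field_simps)
  qed
  have bor: "\<tau> \<in> sets borel" if "\<tau> \<in> T" for \<tau>
    using AB[OF that] tau_borel by blast
  have uniq: "(\<Sum>\<tau>\<in>T. indicator \<tau> v * F \<tau>) = F \<tau>0" if "\<tau>0 \<in> T" "v \<in> \<tau>0" for v \<tau>0 and F :: "real set \<Rightarrow> real"
  proof -
    have "(\<Sum>\<tau>\<in>T. indicator \<tau> v * F \<tau>) = indicator \<tau>0 v * F \<tau>0 + (\<Sum>\<tau>\<in>T-{\<tau>0}. indicator \<tau> v * F \<tau>)"
      using fin that(1) by (rule sum.remove)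
    also have "(\<Sum>\<tau>\<in>T-{\<tau>0}. indicator \<tau> v * F \<tau>) = 0"
    proof (rule sum.neutral, intro ballI)
      fix \<tau> assume "\<tau> \<in> T - {\<tau>0}"
      hence "v \<notin> \<tau>" using disj that unfolding disjoint_def by blast
      thus "indicator \<tau> v * F \<tau> = 0" by simp
    qed
    finally show ?thesis using that by simp
  qed
  have ex0: "\<exists>\<tau>0\<in>T. v \<in> \<tau>0" if "v \<in> {0..1}" for v using that un by blast
  have im: "(\<lambda>z. indicator \<tau> (q z) :: real) \<in> borel_measurable D" if "\<tau> \<in> T" for \<tau>
    using measurable_compose[OF qm borel_measurable_indicator[OF bor[OF that]]] by simp
  define r where "r z = (\<Sum>\<tau>\<in>T. indicator \<tau> (q z) * (q z - c \<tau>))" for z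
  have rm: "r \<in> borel_measurable D" unfolding r_def
  proof (rule borel_measurable_sum)
    fix \<tau> assume "\<tau> \<in> T"
    show "(\<lambda>z. indicator \<tau> (q z) * (q z - c \<tau>)) \<in> borel_measurable D"
      by (intro borel_measurable_times borel_measurable_diff im[OF \<open>\<tau> \<in> T\<close>] qm borel_measurable_const)
  qed
  have rb: "\<bar>r z\<bar> \<le> w / 2" if zs: "z \<in> space D" for z
  proof -
    obtain \<tau>0 where t0: "\<tau>0 \<in> T" "q z \<in> \<tau>0" using ex0[of "q z"] q01 zs by auto
    show ?thesis unfolding r_def using uniq[OF t0, of "\<lambda>\<tau>. q z - c \<tau>"] close[OF t0] by simp
  qed
  have pw: "q z * g z = (\<Sum>\<tau>\<in>T. c \<tau> * (indicator \<tau> (q z) * g z)) + r z * g z" if zs: "z \<in> space D" for z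
  proof -
    obtain \<tau>0 where t0: "\<tau>0 \<in> T" "q z \<in> \<tau>0" using ex0[of "q z"] q01 zs by auto
    have e1: "(\<Sum>\<tau>\<in>T. c \<tau> * (indicator \<tau> (q z) * g z)) = (\<Sum>\<tau>\<in>T. indicator \<tau> (q z) * (c \<tau>)) * g z"
      by (simp add: sum_distrib_right sum_distrib_left mult_ac)
    have e2: "(\<Sum>\<tau>\<in>T. indicator \<tau> (q z) * (c \<tau>)) = c \<tau>0" by (rule uniq[OF t0])
    have e3: "r z = q z - c \<tau>0" unfolding r_def by (rule uniq[OF t0])
    show ?thesis unfolding e1 e2 e3 by (simp add: algebra_simps)
  qed
  have intI: "integrable D (\<lambda>z. indicator \<tau> (q z) * g z)" if "\<tau> \<in> T" for \<tau>
  proof (rule integrable_const_bound[where B=K])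
    show "AE x in D. norm (indicator \<tau> (q x) * g x) \<le> K"
      using gK by (intro AE_I2) (auto simp: indicator_def)
    show "(\<lambda>z. indicator \<tau> (q z) * g z) \<in> borel_measurable D" using im[OF that] gm by simp
  qed
  have intR: "integrable D (\<lambda>z. r z * g z)"
  proof (rule integrable_const_bound[where B="w/2*K"])
    show "AE x in D. norm (r x * g x) \<le> w/2*K"
    proof (intro AE_I2)
      fix x assume x: "x \<in> space D"
      have "\<bar>r x\<bar> * \<bar>g x\<bar> \<le> w/2 * K" using rb[OF x] gK x wpos
        by (intro mult_mono) auto
      thus "norm (r x * g x) \<le> w/2*K" by (simp add: abs_mult)
    qed
    show "(\<lambda>z. r z * g z) \<in> borel_measurable D" using rm gm by simp
  qed
  have "(\<integral>z. q z * g z \<partial>D) = (\<integral>z. (\<Sum>\<tau>\<in>T. c \<tau> * (indicator \<tau> (q z) * g z)) + r z * g z \<partial>D)"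
    using pw by (intro Bochner_Integration.integral_cong) auto
  also have "\<dots> = (\<Sum>\<tau>\<in>T. c \<tau> * (\<integral>z. indicator \<tau> (q z) * g z \<partial>D)) + (\<integral>z. r z * g z \<partial>D)"
    using intI intR by (simp add: integral_sum integral_add)
  finally have eq: "(\<integral>z. q z * g z \<partial>D) = (\<Sum>\<tau>\<in>T. c \<tau> * (\<integral>z. indicator \<tau> (q z) * g z \<partial>D)) + (\<integral>z. r z * g z \<partial>D)" .
  have b1: "\<bar>\<Sum>\<tau>\<in>T. c \<tau> * (\<integral>z. indicator \<tau> (q z) * g z \<partial>D)\<bar> \<le> real (card T) * \<alpha>"
  proof -
    have "\<bar>\<Sum>\<tau>\<in>T. c \<tau> * (\<integral>z. indicator \<tau> (q z) * g z \<partial>D)\<bar> \<le> (\<Sum>\<tau>\<in>T. \<bar>c \<tau> * (\<integral>z. indicator \<tau> (q z) * g z \<partial>D)\<bar>)"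
      by (rule sum_abs)
    also have "\<dots> \<le> (\<Sum>\<tau>\<in>T. \<alpha>)"
    proof (rule sum_mono)
      fix \<tau> assume t: "\<tau> \<in> T"
      have "\<bar>c \<tau>\<bar> * \<bar>\<integral>z. indicator \<tau> (q z) * g z \<partial>D\<bar> \<le> 1 * \<alpha>"
        using c01[OF t] cons t by (intro mult_mono) auto
      thus "\<bar>c \<tau> * (\<integral>z. indicator \<tau> (q z) * g z \<partial>D)\<bar> \<le> \<alpha>" by (simp add: abs_mult)
    qed
    finally show ?thesis by simp
  qed
  have b2: "\<bar>\<integral>z. r z * g z \<partial>D\<bar> \<le> w / 2 * K"
  proof -
    have "\<bar>\<integral>z. r z * g z \<partial>D\<bar> \<le> (\<integral>z. w/2*K \<partial>D)"
    proof -
      have "(\<integral>z. \<bar>r z * g z\<bar> \<partial>D) \<le> (\<integral>z. w/2*K \<partial>D)"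
      proof (rule integral_mono)
        show "integrable D (\<lambda>z. \<bar>r z * g z\<bar>)" by (rule integrable_abs[OF intR])
        show "integrable D (\<lambda>z. w/2*K)" by simp
        fix x assume x: "x \<in> space D"
        have "\<bar>r x\<bar> * \<bar>g x\<bar> \<le> w/2 * K" using rb[OF x] gK x wpos
          by (intro mult_mono) auto
        thus "\<bar>r x * g x\<bar> \<le> w/2*K" by (simp add: abs_mult)
      qed
      with integral_abs_bound[of D "\<lambda>z. r z * g z"]
      show ?thesis by linarith
    qed
    thus ?thesis by (simp add: prob_space)
  qed
  show ?thesis using eq b1 b2 by linarith
qed


lemma comp_meas:
  fixes f :: "'z \<Rightarrow> real^'d"
  assumes "f \<in> borel_measurable D"
  shows "(\<lambda>z. f z $ i) \<in> borel_measurable D"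
  using borel_measurable_continuous_on[where f="\<lambda>v. v $ i", OF continuous_on_component[OF continuous_on_id] assms]
  by simp

lemma cons_bound:
  fixes D :: "('x \<times> (real^'d)) measure"
  assumes P: "prob_space D" and cw: "consistent_wrt D \<alpha> h Cs" and C: "C \<in> Cs"
    and Cm: "{z \<in> space D. fst z \<in> C} \<in> sets D" and ag: "\<alpha> \<ge> 0"
  shows "\<bar>\<integral>z. indicator C (fst z) * (snd z $ i - h (fst z) $ i) \<partial>D\<bar> \<le> \<alpha>"
proof -
  interpret prob_space D by (rule P)
  define I where "I = (\<integral>z. indicator C (fst z) * (snd z $ i - h (fst z) $ i) \<partial>D)"
  define Pr where "Pr = Pr_in D C"
  have cm: "\<bar>I / Pr\<bar> \<le> \<alpha> / Pr" using cw C unfolding consistent_wrt_def cond_mean_def I_def Pr_def by blast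
  have Pge: "Pr \<ge> 0" unfolding Pr_def Pr_in_def by simp
  show ?thesis
  proof (cases "Pr = 0")
    case True
    have "{z \<in> space D. fst z \<in> C} \<in> null_sets D"
      using True Cm unfolding Pr_def Pr_in_def by (simp add: null_sets_def emeasure_eq_measure)
    hence "AE z in D. fst z \<notin> C" by (rule AE_I') auto
    hence "AE z in D. indicator C (fst z) * (snd z $ i - h (fst z) $ i) = (0::real)"
      by eventually_elim simp
    hence "I = 0" unfolding I_def by (rule integral_eq_zero_AE)
    moreover note ag
    ultimately show ?thesis unfolding I_def[symmetric] by simp
  next
    case False
    hence Pp: "Pr > 0" using Pge by simp
    have "\<bar>I\<bar> / Pr \<le> \<alpha> / Pr" using cm Pp by (simp add: abs_divide)
    hence "\<bar>I\<bar> \<le> \<alpha>" using Pp by (simp add: divide_le_cancel)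
    thus ?thesis unfolding I_def .
  qed
qed


lemma bucket_borel:
  assumes bk: "bucketing w T" and tT: "\<tau> \<in> T"
  shows "\<tau> \<in> sets borel"
proof -
  have ex: "\<forall>\<tau>\<in>T. \<exists>a b. b - a = w \<and> {a<..<b} \<subseteq> \<tau> \<and> \<tau> \<subseteq> {a..b}" using bk unfolding bucketing_def by (elim conjE)
  have "\<exists>a b. b - a = w \<and> {a<..<b} \<subseteq> \<tau> \<and> \<tau> \<subseteq> {a..b}" by (rule bspec[OF ex tT])
  then obtain a b where "{a<..<b} \<subseteq> \<tau>" "\<tau> \<subseteq> {a..b}" by blast
  thus ?thesis by (rule tau_borel)
qed

lemma policy_bound:
  fixes D :: "('x \<times> (real^'d)) measure" and p h :: "'x \<Rightarrow> real^'d"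
  assumes P: "prob_space D" and bk: "bucketing w T" and wpos: "w > 0" and ag: "\<alpha> \<ge> 0"
    and pm: "(\<lambda>z. p (fst z)) \<in> borel_measurable D"
    and ym: "(\<lambda>z. snd z) \<in> borel_measurable D"
    and hm: "(\<lambda>z. h (fst z)) \<in> borel_measurable D"
    and p01: "\<forall>x i. 0 \<le> p x $ i \<and> p x $ i \<le> 1"
    and gK: "\<forall>z\<in>space D. \<forall>i. \<bar>snd z $ i - h (fst z) $ i\<bar> \<le> K"
    and cw: "consistent_wrt D \<alpha> h (level_sets T p)"
  shows "\<bar>\<integral>z. p (fst z) \<bullet> (snd z - h (fst z)) \<partial>D\<bar> \<le> real CARD('d) * (real (card T) * \<alpha> + w / 2 * K)"
proof -
  interpret prob_space D by (rule P)
  have bor: "\<tau> \<in> sets borel" if tT: "\<tau> \<in> T" for \<tau> by (rule bucket_borel[OF bk tT])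
  define q :: "'d \<Rightarrow> ('x \<times> (real^'d)) \<Rightarrow> real" where "q i z = p (fst z) $ i" for i z
  define g :: "'d \<Rightarrow> ('x \<times> (real^'d)) \<Rightarrow> real" where "g i z = snd z $ i - h (fst z) $ i" for i z
  have qe: "q i = (\<lambda>z. p (fst z) $ i)" for i by (rule ext) (simp add: q_def)
  have ge: "g i = (\<lambda>z. snd z $ i - h (fst z) $ i)" for i by (rule ext) (simp add: g_def)
  have qm: "q i \<in> borel_measurable D" for i unfolding qe by (rule comp_meas[OF pm])
  have gm: "g i \<in> borel_measurable D" for i unfolding ge
    by (rule borel_measurable_diff[OF comp_meas[OF ym] comp_meas[OF hm]])
  have each: "\<bar>\<integral>z. q i z * g i z \<partial>D\<bar> \<le> real (card T) * \<alpha> + w / 2 * K" for i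
  proof (rule coord_bound[OF P bk wpos qm gm])
    show "\<forall>z\<in>space D. 0 \<le> q i z \<and> q i z \<le> 1" using p01 unfolding q_def by auto
    show "\<forall>z\<in>space D. \<bar>g i z\<bar> \<le> K" using gK unfolding g_def by auto
    show "\<forall>\<tau>\<in>T. \<bar>\<integral>z. indicator \<tau> (q i z) * g i z \<partial>D\<bar> \<le> \<alpha>"
    proof
      fix \<tau> assume t: "\<tau> \<in> T"
      define C where "C = {x. p x $ i \<in> \<tau>}"
      have CC: "C \<in> level_sets T p" unfolding level_sets_def C_def using t by blast
      have "{z \<in> space D. fst z \<in> C} = q i -` \<tau> \<inter> space D" unfolding C_def q_def by auto
      also have "\<dots> \<in> sets D" by (rule measurable_sets[OF qm bor[OF t]])
      finally have Cm: "{z \<in> space D. fst z \<in> C} \<in> sets D" .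
      have "(\<lambda>z. indicator \<tau> (q i z) * g i z) = (\<lambda>z. indicator C (fst z) * (snd z $ i - h (fst z) $ i))"
        unfolding C_def q_def g_def by (auto simp: indicator_def)
      thus "\<bar>\<integral>z. indicator \<tau> (q i z) * g i z \<partial>D\<bar> \<le> \<alpha>"
        using cons_bound[OF P cw CC Cm ag, of i] by simp
    qed
  qed
  have int: "integrable D (\<lambda>z. q i z * g i z)" for i
  proof (rule integrable_const_bound[where B=K])
    show "AE x in D. norm (q i x * g i x) \<le> K"
    proof (intro AE_I2)
      fix x assume x: "x \<in> space D"
      have "\<bar>q i x\<bar> * \<bar>g i x\<bar> \<le> 1 * K" using p01 gK x unfolding q_def g_def
        by (intro mult_mono) auto
      thus "norm (q i x * g i x) \<le> K" by (simp add: abs_mult)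
    qed
    show "(\<lambda>z. q i z * g i z) \<in> borel_measurable D" using qm gm by simp
  qed
  have "(\<integral>z. p (fst z) \<bullet> (snd z - h (fst z)) \<partial>D) = (\<integral>z. (\<Sum>i\<in>UNIV. q i z * g i z) \<partial>D)"
    unfolding q_def g_def inner_vec_def by simp
  also have "\<dots> = (\<Sum>i\<in>UNIV. \<integral>z. q i z * g i z \<partial>D)"
    by (rule Bochner_Integration.integral_sum) (rule int)
  finally have eq: "(\<integral>z. p (fst z) \<bullet> (snd z - h (fst z)) \<partial>D) = (\<Sum>i\<in>UNIV. \<integral>z. q i z * g i z \<partial>D)" .
  have "\<bar>\<Sum>i\<in>UNIV. \<integral>z. q i z * g i z \<partial>D\<bar> \<le> (\<Sum>i\<in>(UNIV::'d set). \<bar>\<integral>z. q i z * g i z \<partial>D\<bar>)"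
    by (rule sum_abs)
  also have "\<dots> \<le> (\<Sum>i\<in>(UNIV::'d set). real (card T) * \<alpha> + w / 2 * K)"
    by (rule sum_mono) (rule each)
  finally show ?thesis unfolding eq by simp
qed


lemma integrable_inner_bd:
  fixes a b :: "'z \<Rightarrow> real^'d"
  assumes P: "prob_space D" and am: "a \<in> borel_measurable D" and bm: "b \<in> borel_measurable D"
    and a1: "\<forall>z\<in>space D. \<forall>i. \<bar>a z $ i\<bar> \<le> 1"
    and bB: "\<forall>z\<in>space D. \<forall>i. \<bar>b z $ i\<bar> \<le> B"
  shows "integrable D (\<lambda>z. a z \<bullet> b z)"
proof -
  interpret prob_space D by (rule P)
  show ?thesis
  proof (rule integrable_const_bound[where B="real CARD('d) * B"])
    show "(\<lambda>z. a z \<bullet> b z) \<in> borel_measurable D" by (rule borel_measurable_inner[OF am bm])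
    show "AE x in D. norm (a x \<bullet> b x) \<le> real CARD('d) * B"
    proof (rule AE_I2)
      fix x assume x: "x \<in> space D"
      have "\<bar>a x \<bullet> b x\<bar> = \<bar>\<Sum>i\<in>UNIV. a x $ i * b x $ i\<bar>" unfolding inner_vec_def by simp
      also have "\<dots> \<le> (\<Sum>i\<in>(UNIV::'d set). \<bar>a x $ i * b x $ i\<bar>)" by (rule sum_abs)
      also have "\<dots> \<le> (\<Sum>i\<in>(UNIV::'d set). B)"
      proof (rule sum_mono)
        fix i :: 'd
        have "\<bar>a x $ i\<bar> * \<bar>b x $ i\<bar> \<le> 1 * B" using a1 bB x by (intro mult_mono) auto
        thus "\<bar>a x $ i * b x $ i\<bar> \<le> B" by (simp add: abs_mult)
      qed
      finally show "norm (a x \<bullet> b x) \<le> real CARD('d) * B" by simp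
    qed
  qed
qed

theorem lemma4:
  fixes D :: "('x \<times> (real^'d)) measure"
    and Y :: "(real^'d) set" and M \<alpha> :: real
    and \<Omega> :: "(real^'d) set" and T :: "real set set"
    and \<pi> h \<pi>h :: "'x \<Rightarrow> real^'d"
  assumes "prob_space D"
    and "\<forall>z\<in>space D. snd z \<in> Y"
    and "\<forall>y\<in>Y. \<forall>i. \<bar>y $ i\<bar> \<le> M"
    and "\<alpha> > 0"
    and "bucketing (sqrt (\<alpha> / M)) T"
    and "\<forall>a\<in>\<Omega>. \<forall>i. 0 \<le> a $ i \<and> a $ i \<le> 1"
    and "\<forall>x. \<pi> x \<in> \<Omega>"
    and "\<forall>x. h x \<in> Y"
    and "induced_policy \<Omega> h \<pi>h"
    and "(\<lambda>z. snd z) \<in> borel_measurable D"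
    and "(\<lambda>z. \<pi> (fst z)) \<in> borel_measurable D"
    and "(\<lambda>z. h (fst z)) \<in> borel_measurable D"
    and "(\<lambda>z. \<pi>h (fst z)) \<in> borel_measurable D"
    and "consistent_wrt D \<alpha> h (level_sets T \<pi>h)"
    and "consistent_wrt D \<alpha> h (level_sets T \<pi>)"
  shows "(\<integral>z. \<pi>h (fst z) \<bullet> snd z \<partial>D)
           \<ge> (\<integral>z. \<pi> (fst z) \<bullet> snd z \<partial>D) - 4 * real CARD('d) * sqrt (\<alpha> * M)"
proof -
  note A = assms
  interpret prob_space D by (rule A(1))
  define w where "w = sqrt (\<alpha> / M)"
  have Mge: "M \<ge> 0" using A(3) A(8) by (meson abs_ge_zero order_trans)
  have Mne: "M \<noteq> 0"
  proof
    assume "M = 0"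
    moreover have "real (card T) * sqrt (\<alpha> / M) = 1" using A(5) unfolding bucketing_def by (elim conjE)
    ultimately show False by simp
  qed
  hence Mpos: "M > 0" using Mge by simp
  have wpos: "w > 0" unfolding w_def using Mpos A(4) by simp
  have ww: "w * w = \<alpha> / M" unfolding w_def using Mpos A(4) by simp
  have cT: "real (card T) * w = 1" using A(5) unfolding bucketing_def w_def by simp
  have sq: "sqrt (\<alpha> * M) = w * M"
  proof -
    have e: "\<alpha> * M = (w * M)^2" using ww Mpos by (simp add: field_simps power2_eq_square)
    have "sqrt (\<alpha> * M) = \<bar>w * M\<bar>" unfolding e by (rule real_sqrt_abs)
    thus ?thesis using wpos Mpos by simp
  qed
  have Bval: "real (card T) * \<alpha> + w / 2 * (2 * M) = 2 * sqrt (\<alpha> * M)"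
  proof -
    have "real (card T) * \<alpha> = real (card T) * (w * w * M)" using ww Mpos by simp
    also have "\<dots> = (real (card T) * w) * (w * M)" by (simp add: algebra_simps)
    also have "\<dots> = w * M" using cT by simp
    finally show ?thesis using sq by simp
  qed
  have bk: "bucketing w T" using A(5) unfolding w_def .
  have ag: "\<alpha> \<ge> 0" using A(4) by simp
  have pih: "\<forall>x. \<pi>h x \<in> \<Omega> \<and> (\<forall>a\<in>\<Omega>. a \<bullet> h x \<le> \<pi>h x \<bullet> h x)" using A(9) unfolding induced_policy_def .
  have p01: "\<forall>x i. 0 \<le> \<pi> x $ i \<and> \<pi> x $ i \<le> 1" using A(6) A(7) by blast
  have ph01: "\<forall>x i. 0 \<le> \<pi>h x $ i \<and> \<pi>h x $ i \<le> 1" using A(6) pih by blast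
  have gK: "\<forall>z\<in>space D. \<forall>i. \<bar>snd z $ i - h (fst z) $ i\<bar> \<le> 2 * M"
  proof (intro ballI allI)
    fix z i assume z: "z \<in> space D"
    have "\<bar>snd z $ i\<bar> \<le> M" using A(2) A(3) z by blast
    moreover have "\<bar>h (fst z) $ i\<bar> \<le> M" using A(3) A(8) by blast
    ultimately show "\<bar>snd z $ i - h (fst z) $ i\<bar> \<le> 2 * M" by linarith
  qed
  have b1: "\<bar>\<integral>z. \<pi>h (fst z) \<bullet> (snd z - h (fst z)) \<partial>D\<bar> \<le> 2 * real CARD('d) * sqrt (\<alpha> * M)"
    using policy_bound[OF A(1) bk wpos ag A(13) A(10) A(12) ph01 gK A(14)] Bval by simp
  have b2: "\<bar>\<integral>z. \<pi> (fst z) \<bullet> (snd z - h (fst z)) \<partial>D\<bar> \<le> 2 * real CARD('d) * sqrt (\<alpha> * M)"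
    using policy_bound[OF A(1) bk wpos ag A(11) A(10) A(12) p01 gK A(15)] Bval by simp
  have dm: "(\<lambda>z. snd z - h (fst z)) \<in> borel_measurable D" by (rule borel_measurable_diff[OF A(10) A(12)])
  have h1: "\<forall>z\<in>space D. \<forall>i. \<bar>h (fst z) $ i\<bar> \<le> M" using A(3) A(8) by blast
  have pb: "\<forall>z\<in>space D. \<forall>i. \<bar>\<pi> (fst z) $ i\<bar> \<le> 1" using p01 by (simp add: abs_le_iff)
  have phb: "\<forall>z\<in>space D. \<forall>i. \<bar>\<pi>h (fst z) $ i\<bar> \<le> 1" using ph01 by (simp add: abs_le_iff)
  have gK2: "\<forall>z\<in>space D. \<forall>i. \<bar>(snd z - h (fst z)) $ i\<bar> \<le> 2 * M" using gK by simp
  have i1: "integrable D (\<lambda>z. \<pi>h (fst z) \<bullet> h (fst z))" by (rule integrable_inner_bd[OF A(1) A(13) A(12) phb h1])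
  have i2: "integrable D (\<lambda>z. \<pi>h (fst z) \<bullet> (snd z - h (fst z)))" by (rule integrable_inner_bd[OF A(1) A(13) dm phb gK2])
  have i3: "integrable D (\<lambda>z. \<pi> (fst z) \<bullet> h (fst z))" by (rule integrable_inner_bd[OF A(1) A(11) A(12) pb h1])
  have i4: "integrable D (\<lambda>z. \<pi> (fst z) \<bullet> (snd z - h (fst z)))" by (rule integrable_inner_bd[OF A(1) A(11) dm pb gK2])
  have e1: "(\<integral>z. \<pi>h (fst z) \<bullet> snd z \<partial>D) = (\<integral>z. \<pi>h (fst z) \<bullet> h (fst z) \<partial>D) + (\<integral>z. \<pi>h (fst z) \<bullet> (snd z - h (fst z)) \<partial>D)"
  proof -
    have "(\<integral>z. \<pi>h (fst z) \<bullet> snd z \<partial>D) = (\<integral>z. \<pi>h (fst z) \<bullet> h (fst z) + \<pi>h (fst z) \<bullet> (snd z - h (fst z)) \<partial>D)"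
      by (simp add: inner_diff_right)
    also have "\<dots> = (\<integral>z. \<pi>h (fst z) \<bullet> h (fst z) \<partial>D) + (\<integral>z. \<pi>h (fst z) \<bullet> (snd z - h (fst z)) \<partial>D)"
      by (rule Bochner_Integration.integral_add[OF i1 i2])
    finally show ?thesis .
  qed
  have e2: "(\<integral>z. \<pi> (fst z) \<bullet> snd z \<partial>D) = (\<integral>z. \<pi> (fst z) \<bullet> h (fst z) \<partial>D) + (\<integral>z. \<pi> (fst z) \<bullet> (snd z - h (fst z)) \<partial>D)"
  proof -
    have "(\<integral>z. \<pi> (fst z) \<bullet> snd z \<partial>D) = (\<integral>z. \<pi> (fst z) \<bullet> h (fst z) + \<pi> (fst z) \<bullet> (snd z - h (fst z)) \<partial>D)"
      by (simp add: inner_diff_right)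
    also have "\<dots> = (\<integral>z. \<pi> (fst z) \<bullet> h (fst z) \<partial>D) + (\<integral>z. \<pi> (fst z) \<bullet> (snd z - h (fst z)) \<partial>D)"
      by (rule Bochner_Integration.integral_add[OF i3 i4])
    finally show ?thesis .
  qed
  have mono: "(\<integral>z. \<pi> (fst z) \<bullet> h (fst z) \<partial>D) \<le> (\<integral>z. \<pi>h (fst z) \<bullet> h (fst z) \<partial>D)"
    by (rule integral_mono[OF i3 i1]) (use pih A(7) in blast)
  show ?thesis using e1 e2 mono b1 b2 by linarith
qed

end
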